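(* Let $p\ge 1$, $\alpha\in[0,1]$, $0<\varepsilon\le 1$ and $g\in\mathbb{R}^p$ with $g\neq 0$. Let $m$ be an index with $|g_m|=\max_d|g_d|$, let $I_{12}$ be the $p\times p$ diagonal matrix with $(I_{12})_{dd}=1$ if $|g_d|\ge \alpha|g_m|$ and $0$ otherwise, and let $p_1:=\sum_d (I_{12})_{dd}$ (so $1\le p_1\le p$). Define $$\Delta x_{12,\varepsilon}:=-I_{12}g\left(\frac{\alpha\varepsilon}{\|I_{12}g\|_1}+\frac{(1-\alpha)\sqrt{\varepsilon}}{\|I_{12}g\|_2}\right)$$ and $h_\alpha(v):=\alpha\|v\|_1+(1-\alpha)\|v\|_2^2$. Then $$0.61\,\varepsilon<\varepsilon\left(1-\alpha(1-\alpha)(2-\alpha)\left(1-\frac{\varepsilon}{p_1}\right)\right)\le h_\alpha(\Delta x_{12,\varepsilon})\le \varepsilon\left(1+\alpha(1-\alpha)\left(\sqrt{\frac{p_1}{\varepsilon}}-1\right)\right)\le \varepsilon\left(1+\frac{\sqrt{p_1/\varepsilon}-1}{4}\right).$$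
   Context: $\Delta x_{12,\varepsilon}$ is the elastic gradient descent update direction in the general stagewise framework with step size $\varepsilon$. *)

theory Defs
  imports "HOL-Analysis.Analysis"
begin

definition l1norm :: "real ^ 'n \<Rightarrow> real" where
  "l1norm v = (\<Sum>d\<in>UNIV. \<bar>v $ d\<bar>)"

definition l2norm :: "real ^ 'n \<Rightarrow> real" where
  "l2norm v = sqrt (\<Sum>d\<in>UNIV. (v $ d)^2)"

definition I12 :: "real \<Rightarrow> real ^ 'n \<Rightarrow> 'n \<Rightarrow> real ^ 'n ^ 'n" where
  "I12 \<alpha> g m = (\<chi> i j. if i = j \<and> \<bar>g $ i\<bar> \<ge> \<alpha> * \<bar>g $ m\<bar> then 1 else 0)"

definition p1 :: "real \<Rightarrow> real ^ 'n \<Rightarrow> 'n \<Rightarrow> real" where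
  "p1 \<alpha> g m = (\<Sum>d\<in>UNIV. I12 \<alpha> g m $ d $ d)"

definition delta_x12 :: "real \<Rightarrow> real \<Rightarrow> real ^ 'n \<Rightarrow> 'n \<Rightarrow> real ^ 'n" where
  "delta_x12 \<alpha> \<epsilon> g m =
     - ((\<alpha> * \<epsilon> / l1norm (I12 \<alpha> g m *v g)
         + (1 - \<alpha>) * sqrt \<epsilon> / l2norm (I12 \<alpha> g m *v g)) *\<^sub>R (I12 \<alpha> g m *v g))"

definition h_alpha :: "real \<Rightarrow> real ^ 'n \<Rightarrow> real" where
  "h_alpha \<alpha> v = \<alpha> * l1norm v + (1 - \<alpha>) * (l2norm v)^2"

end

theory Submission imports Defs begin
lemma poly39: fixes a :: real assumes "0 \<le> a" "a \<le> 1" shows "a*(1-a)*(2-a) < 39/100"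
proof -
  define q where "q = (a-21/50)^2*(54/25-a)"
  have h: "q \<ge> 0" using assms unfolding q_def by simp
  have e: "39/100 - a*(1-a)*(2-a) = q + 1122/125000 - 23/2500*a"
    unfolding q_def by (simp add: field_simps power2_eq_square)
  have "a*(1-a)*(2-a) < 39/100"
  proof (cases "a \<le> 9/10")
    case True then show ?thesis using h e by linarith
  next
    case False
    have "a*(2-a) \<le> 1" using sum_power2_ge_zero[of "a-1" 0] by (simp add: algebra_simps power2_eq_square)
    hence "a*(2-a)*(1-a) \<le> 1*(1-a)" using assms by (intro mult_right_mono) auto
    then show ?thesis using False by (simp add: algebra_simps)
  qed
  then show ?thesis by simp
qed
lemma F_id:
  fixes a y :: real assumes "y > 0"
  shows "a^2 + a*(1-a)/y + (1-a)*(a*y+1-a)^2 = 1 + a*(1-a)*((1/y - 1) + a*y^2 + 2*(1-a)*y - (2-a))"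
  using assms by (simp add: field_simps power2_eq_square)

lemma F_bounds:
  fixes a y y0 :: real
  assumes a: "0 \<le> a" "a \<le> 1" and y: "0 < y0" "y0 \<le> y" "y \<le> 1"
  shows "1 - a*(1-a)*(2-a)*(1-y0^2) \<le> a^2 + a*(1-a)/y + (1-a)*(a*y+1-a)^2"
    and "a^2 + a*(1-a)/y + (1-a)*(a*y+1-a)^2 \<le> 1 + a*(1-a)*(1/y0 - 1)"
proof -
  have y0: "y > 0" using y by linarith
  have k: "a*(1-a) \<ge> 0" using a by simp
  have i1: "1/y - 1 \<ge> 0" using y by (simp add: field_simps)
  have y2: "y^2 \<le> y" using y by (simp add: power2_eq_square mult_le_cancel_left1)
  have y02: "y0^2 \<le> y^2" using y by (simp add: power_mono)
  have t1: "a*y^2 + 2*(1-a)*y \<ge> (2-a)*y0^2"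
  proof -
    have "(1-a)*y^2 \<le> (1-a)*y" using a y2 by (simp add: mult_left_mono)
    moreover have "(2-a)*y0^2 \<le> (2-a)*y^2" using a y02 by (simp add: mult_left_mono)
    ultimately show ?thesis by (simp add: algebra_simps)
  qed
  have "(1/y - 1) + a*y^2 + 2*(1-a)*y - (2-a) \<ge> -(2-a)*(1-y0^2)"
    using i1 t1 by (simp add: algebra_simps)
  hence "a*(1-a)*((1/y - 1) + a*y^2 + 2*(1-a)*y - (2-a)) \<ge> a*(1-a)*(-(2-a)*(1-y0^2))"
    using k mult_left_mono by blast
  then show "1 - a*(1-a)*(2-a)*(1-y0^2) \<le> a^2 + a*(1-a)/y + (1-a)*(a*y+1-a)^2"
    unfolding F_id[OF y0] by (simp add: algebra_simps)
  have t2: "a*y^2 + 2*(1-a)*y \<le> 2 - a"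
  proof -
    have "a*y^2 \<le> a" using a y y2 by (simp add: mult_left_le)
    moreover have "(1-a)*y \<le> 1-a" using a y by (simp add: mult_left_le)
    ultimately show ?thesis by (simp add: algebra_simps)
  qed
  have "1/y \<le> 1/y0" using y by (simp add: frac_le)
  hence "(1/y - 1) + a*y^2 + 2*(1-a)*y - (2-a) \<le> 1/y0 - 1" using t2 by simp
  hence "a*(1-a)*((1/y - 1) + a*y^2 + 2*(1-a)*y - (2-a)) \<le> a*(1-a)*(1/y0 - 1)"
    using k mult_left_mono by blast
  then show "a^2 + a*(1-a)/y + (1-a)*(a*y+1-a)^2 \<le> 1 + a*(1-a)*(1/y0 - 1)"
    unfolding F_id[OF y0] by simp
qed

lemma core:
  fixes a e L1 L2 P c :: real
  assumes a: "0 \<le> a" "a \<le> 1" and e: "0 < e" "e \<le> 1"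
    and L: "0 < L2" "L2 \<le> L1" "L1^2 \<le> P * L2^2" and P: "1 \<le> P"
    and c: "c = a*e/L1 + (1-a)* sqrt e/L2"
  shows "e * (1 - a*(1-a)*(2-a)*(1 - e/P)) \<le> a*(c*L1) + (1-a)*(c^2*L2^2)"
    and "a*(c*L1) + (1-a)*(c^2*L2^2) \<le> e * (1 + a*(1-a)*(sqrt (P/e) - 1))"
proof -
  define s where "s = sqrt e"
  have s: "0 < s" "s \<le> 1" "s^2 = e" using e unfolding s_def by auto
  have L1: "L1 > 0" using L by linarith
  have Pp: "P > 0" using P by linarith
  define y where "y = s*L2/L1"
  define y0 where "y0 = s / sqrt P"
  have y0p: "0 < y0" unfolding y0_def using s Pp by simp
  have "L1 \<le> sqrt P * L2"
  proof -
    have "sqrt (L1^2) \<le> sqrt (P*L2^2)" using L by (simp only: real_sqrt_le_iff)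
    then show ?thesis using L1 L Pp by (simp add: real_sqrt_mult)
  qed
  hence "1 / sqrt P \<le> L2 / L1" using L1 Pp by (simp add: field_simps)
  hence y0y: "y0 \<le> y" unfolding y0_def y_def using s
    by (metis mult_left_mono less_imp_le times_divide_eq_right mult_1_right)
  have y1: "y \<le> 1"
  proof -
    have "L2 * s \<le> L2 * 1" using s L by (intro mult_left_mono) auto
    then have "L2 * s \<le> L1" using L by linarith
    then show ?thesis using L L1 by (simp add: field_simps y_def)
  qed
  have yp: "y > 0" unfolding y_def using s L L1 by simp
  have cs: "c = a* s^2/L1 + (1-a)* s/L2" unfolding c s_def using e by simp
  have hid0: "a*(c*L1) + (1-a)*(c^2*L2^2) = s^2 * (a^2 + a*(1-a)/y + (1-a)*(a*y+1-a)^2)"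
    unfolding cs y_def using s(1) L L1
    by (simp add: field_simps power2_eq_square)
  have hid: "a*(c*L1) + (1-a)*(c^2*L2^2) = e * (a^2 + a*(1-a)/y + (1-a)*(a*y+1-a)^2)"
    using hid0 s(3) by simp
  have y02: "y0^2 = e/P" unfolding y0_def using s Pp by (simp add: power_divide)
  have y0i: "1/y0 = sqrt (P/e)" unfolding y0_def s_def using e Pp by (simp add: real_sqrt_divide)
  show "e * (1 - a*(1-a)*(2-a)*(1 - e/P)) \<le> a*(c*L1) + (1-a)*(c^2*L2^2)"
    unfolding hid using F_bounds(1)[OF a y0p y0y y1] e y02 by (simp add: mult_left_mono)
  show "a*(c*L1) + (1-a)*(c^2*L2^2) \<le> e * (1 + a*(1-a)*(sqrt (P/e) - 1))"
    unfolding hid using F_bounds(2)[OF a y0p y0y y1] e y0i by (simp add: mult_left_mono)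
qed
theorem theorem5:
  fixes g :: "real ^ 'n" and \<alpha> \<epsilon> :: real and m :: 'n
  assumes "0 \<le> \<alpha>" "\<alpha> \<le> 1" "0 < \<epsilon>" "\<epsilon> \<le> 1" "g \<noteq> 0"
    and "\<bar>g $ m\<bar> = Max {\<bar>g $ d\<bar> | d. True}"
  shows "0.61 * \<epsilon> < \<epsilon> * (1 - \<alpha> * (1 - \<alpha>) * (2 - \<alpha>) * (1 - \<epsilon> / p1 \<alpha> g m))
    \<and> \<epsilon> * (1 - \<alpha> * (1 - \<alpha>) * (2 - \<alpha>) * (1 - \<epsilon> / p1 \<alpha> g m))
           \<le> h_alpha \<alpha> (delta_x12 \<alpha> \<epsilon> g m)
    \<and> h_alpha \<alpha> (delta_x12 \<alpha> \<epsilon> g m)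
           \<le> \<epsilon> * (1 + \<alpha> * (1 - \<alpha>) * (sqrt (p1 \<alpha> g m / \<epsilon>) - 1))
    \<and> \<epsilon> * (1 + \<alpha> * (1 - \<alpha>) * (sqrt (p1 \<alpha> g m / \<epsilon>) - 1))
           \<le> \<epsilon> * (1 + (sqrt (p1 \<alpha> g m / \<epsilon>) - 1) / 4)"
proof -
  define S where "S = {d. \<alpha> * \<bar>g $ m\<bar> \<le> \<bar>g $ d\<bar>}"
  define u where "u = I12 \<alpha> g m *v g"
  have u: "u $ d = (if d \<in> S then g $ d else 0)" for d
    unfolding u_def I12_def S_def matrix_vector_mult_def
    by (auto simp: if_distrib[of "\<lambda>x. x * _"] cong: if_cong)
  have P: "p1 \<alpha> g m = real (card S)"
    unfolding p1_def I12_def S_def by (simp add: sum.If_cases)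
  have fin: "finite {\<bar>g $ d\<bar> | d. True}"
  proof -
    have "{\<bar>g $ d\<bar> | d. True} = (\<lambda>d. \<bar>g $ d\<bar>) ` UNIV" by auto
    then show ?thesis by simp
  qed
  obtain d where d: "g $ d \<noteq> 0" using assms(5) by (auto simp: vec_eq_iff)
  have "\<bar>g $ d\<bar> \<le> \<bar>g $ m\<bar>" unfolding assms(6) using fin by (intro Max_ge) auto
  hence M: "\<bar>g $ m\<bar> > 0" using d by linarith
  have mS: "m \<in> S" unfolding S_def using assms(2) M by (simp add: mult_left_le_one_le)
  define L1 where "L1 = (\<Sum>d\<in>S. \<bar>g $ d\<bar>)"
  define L2s where "L2s = (\<Sum>d\<in>S. (g $ d)^2)"
  have l1u: "l1norm u = L1" unfolding l1norm_def L1_def u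
    by (simp add: if_distrib[of abs] sum.If_cases)
  have l2u: "l2norm u = sqrt L2s" unfolding l2norm_def L2s_def u
    by (simp add: if_distrib[of "\<lambda>x. x^2"] sum.If_cases)
  have L2s_ge: "L2s \<ge> (g $ m)^2" unfolding L2s_def
    using mS by (intro member_le_sum) auto
  have L2sp: "L2s > 0" using L2s_ge M by (smt (verit) zero_less_power2)
  have L1ge: "\<bar>g $ d\<bar> \<le> L1" if "d \<in> S" for d
    unfolding L1_def using that by (intro member_le_sum) auto
  have L1p: "L1 \<ge> 0" unfolding L1_def by (simp add: sum_nonneg)
  have "L2s \<le> L1 * L1"
  proof -
    have "L2s = (\<Sum>d\<in>S. \<bar>g $ d\<bar> * \<bar>g $ d\<bar>)" unfolding L2s_def
      by (simp add: power2_eq_square abs_mult_self_eq)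
    also have "\<dots> \<le> (\<Sum>d\<in>S. \<bar>g $ d\<bar> * L1)"
      using L1ge by (intro sum_mono mult_left_mono) auto
    also have "\<dots> = L1 * L1" unfolding L1_def by (simp add: sum_distrib_right)
    finally show ?thesis .
  qed
  define L2 where "L2 = sqrt L2s"
  have L2p: "L2 > 0" unfolding L2_def using L2sp by simp
  have L2sq: "L2^2 = L2s" unfolding L2_def using L2sp by simp
  have L21: "L2 \<le> L1" unfolding L2_def using \<open>L2s \<le> L1 * L1\<close> L1p
    by (metis power2_eq_square real_sqrt_abs real_sqrt_le_mono abs_of_nonneg)
  have CS: "L1^2 \<le> real (card S) * L2^2"
    unfolding L2sq L1_def L2s_def using sum_squared_le_sum_of_squares[of "\<lambda>d. \<bar>g $ d\<bar>" S]
    by (simp add: mult.commute)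
  have cardS: "1 \<le> real (card S)" 
  proof -
    have "finite S" by simp
    then have "card S > 0" using mS card_gt_0_iff by blast
    then show ?thesis by simp
  qed
  define c where "c = \<alpha> * \<epsilon> / L1 + (1 - \<alpha>) * sqrt \<epsilon> / L2"
  have cp: "c \<ge> 0" unfolding c_def using assms L2p L1p by simp
  have dx: "delta_x12 \<alpha> \<epsilon> g m = - (c *\<^sub>R u)"
    unfolding delta_x12_def c_def u_def[symmetric] l1u l2u L2_def ..
  have "l1norm (- (c *\<^sub>R u)) = c * L1"
    unfolding l1u[symmetric] l1norm_def using cp by (simp add: abs_mult sum_distrib_left)
  moreover have "(l2norm (- (c *\<^sub>R u)))^2 = c^2 * L2^2"
  proof -
    have "(l2norm (- (c *\<^sub>R u)))^2 = c^2 * (l2norm u)^2"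
      unfolding l2norm_def by (simp add: sum_nonneg power_mult_distrib sum_distrib_left)
    then show ?thesis unfolding l2u L2_def .
  qed
  ultimately have hval: "h_alpha \<alpha> (delta_x12 \<alpha> \<epsilon> g m) = \<alpha> * (c * L1) + (1 - \<alpha>) * (c^2 * L2^2)"
    unfolding h_alpha_def dx by simp
  note cr = core[OF assms(1,2,3,4) L2p L21 CS cardS c_def]
  have A: "\<epsilon> * (1 - \<alpha> * (1 - \<alpha>) * (2 - \<alpha>) * (1 - \<epsilon> / p1 \<alpha> g m))
           \<le> h_alpha \<alpha> (delta_x12 \<alpha> \<epsilon> g m)" unfolding hval P using cr(1) .
  have B: "h_alpha \<alpha> (delta_x12 \<alpha> \<epsilon> g m)
           \<le> \<epsilon> * (1 + \<alpha> * (1 - \<alpha>) * (sqrt (p1 \<alpha> g m / \<epsilon>) - 1))" unfolding hval P using cr(2) .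
  have q1: "0 \<le> 1 - \<epsilon> / p1 \<alpha> g m" "1 - \<epsilon> / p1 \<alpha> g m \<le> 1"
    unfolding P using cardS assms(3,4) by (auto simp: field_simps)
  have k: "0 \<le> \<alpha> * (1 - \<alpha>) * (2 - \<alpha>)" using assms(1,2) by simp
  have "\<alpha> * (1 - \<alpha>) * (2 - \<alpha>) * (1 - \<epsilon> / p1 \<alpha> g m) \<le> \<alpha> * (1 - \<alpha>) * (2 - \<alpha>)"
    using k q1 by (simp add: mult_left_le)
  hence "\<alpha> * (1 - \<alpha>) * (2 - \<alpha>) * (1 - \<epsilon> / p1 \<alpha> g m) < 39/100"
    using poly39[OF assms(1,2)] by linarith
  hence Z: "0.61 * \<epsilon> < \<epsilon> * (1 - \<alpha> * (1 - \<alpha>) * (2 - \<alpha>) * (1 - \<epsilon> / p1 \<alpha> g m))"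
    using assms(3) by simp
  have sq: "sqrt (p1 \<alpha> g m / \<epsilon>) - 1 \<ge> 0" unfolding P using cardS assms(3,4) by simp
  have qa: "\<alpha> * (1 - \<alpha>) \<le> 1/4" using sum_power2_ge_zero[of "\<alpha> - 1/2" 0]
    by (simp add: algebra_simps power2_eq_square)
  have "\<alpha> * (1 - \<alpha>) * (sqrt (p1 \<alpha> g m / \<epsilon>) - 1) \<le> 1/4 * (sqrt (p1 \<alpha> g m / \<epsilon>) - 1)"
    using qa sq by (rule mult_right_mono)
  hence D: "\<epsilon> * (1 + \<alpha> * (1 - \<alpha>) * (sqrt (p1 \<alpha> g m / \<epsilon>) - 1))
           \<le> \<epsilon> * (1 + (sqrt (p1 \<alpha> g m / \<epsilon>) - 1) / 4)"
    using assms(3) by (intro mult_left_mono) auto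
  show ?thesis using Z A B D by blast
qed

end
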